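(* For all integers $n$ and $\alpha$ such that $n+1\le\alpha\le (\frac n2)^2+\frac n2+1$ if $n$ is even, and $n+1\le\alpha\le(\frac{n-1}2)^2+n+1$ if $n$ is odd, there exists a minimal $n$-state nondeterministic finite automaton accepting a finite language over a binary alphabet whose equivalent minimal deterministic finite automaton has exactly $\alpha$ states.
   Context: NFAs have a single initial state and a transition function $\delta:Q\times\Sigma\to 2^Q$ that may map to the empty set (no sink state is needed or counted); DFAs are complete, so a sink state is counted. A minimal $n$-state NFA is an NFA with $n$ states such that no NFA with fewer states accepts the same language. *)

theory Defs
  imports Main
begin

text \<open>Binary alphabet: bool. Words: bool list.
  Automata with m states have state set {0..<m} (any finite state set can be relabelled).\<close>

text \<open>NFA: single initial state q0, transition function delta : Q x Sigma -> 2^Q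
  (possibly empty, no sink counted), final states F.\<close>
definition is_nfa :: "nat \<Rightarrow> nat \<Rightarrow> (nat \<Rightarrow> bool \<Rightarrow> nat set) \<Rightarrow> nat set \<Rightarrow> bool" where
  "is_nfa m q0 delta F \<longleftrightarrow> q0 < m \<and> F \<subseteq> {0..<m} \<and> (\<forall>q<m. \<forall>a. delta q a \<subseteq> {0..<m})"

fun nfa_run :: "(nat \<Rightarrow> bool \<Rightarrow> nat set) \<Rightarrow> nat set \<Rightarrow> bool list \<Rightarrow> nat set" where
  "nfa_run delta S [] = S"
| "nfa_run delta S (a # w) = nfa_run delta (\<Union>q\<in>S. delta q a) w"

definition nfa_lang :: "nat \<Rightarrow> (nat \<Rightarrow> bool \<Rightarrow> nat set) \<Rightarrow> nat set \<Rightarrow> bool list set" where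
  "nfa_lang q0 delta F = {w. nfa_run delta {q0} w \<inter> F \<noteq> {}}"

text \<open>Complete DFA (sink state counted).\<close>
definition is_dfa :: "nat \<Rightarrow> nat \<Rightarrow> (nat \<Rightarrow> bool \<Rightarrow> nat) \<Rightarrow> nat set \<Rightarrow> bool" where
  "is_dfa m q0 delta F \<longleftrightarrow> q0 < m \<and> F \<subseteq> {0..<m} \<and> (\<forall>q<m. \<forall>a. delta q a < m)"

definition dfa_lang :: "nat \<Rightarrow> (nat \<Rightarrow> bool \<Rightarrow> nat) \<Rightarrow> nat set \<Rightarrow> bool list set" where
  "dfa_lang q0 delta F = {w. foldl delta q0 w \<in> F}"

definition nfa_accepts_with :: "nat \<Rightarrow> bool list set \<Rightarrow> bool" where
  "nfa_accepts_with m L \<longleftrightarrow> (\<exists>q0 delta F. is_nfa m q0 delta F \<and> nfa_lang q0 delta F = L)"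

definition dfa_accepts_with :: "nat \<Rightarrow> bool list set \<Rightarrow> bool" where
  "dfa_accepts_with m L \<longleftrightarrow> (\<exists>q0 delta F. is_dfa m q0 delta F \<and> dfa_lang q0 delta F = L)"

definition minimal_nfa :: "nat \<Rightarrow> nat \<Rightarrow> (nat \<Rightarrow> bool \<Rightarrow> nat set) \<Rightarrow> nat set \<Rightarrow> bool" where
  "minimal_nfa n q0 delta F \<longleftrightarrow> is_nfa n q0 delta F \<and>
     (\<forall>m<n. \<not> nfa_accepts_with m (nfa_lang q0 delta F))"

definition min_dfa_states :: "bool list set \<Rightarrow> nat" where
  "min_dfa_states L = (LEAST m. dfa_accepts_with m L)"

end

theory Submission imports Defs begin


lemma run_append: "nfa_run d S (u@v) = nfa_run d (nfa_run d S u) v"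
  by (induction u arbitrary: S) auto

lemma run_union: "nfa_run d S v = (\<Union>s\<in>S. nfa_run d {s} v)"
proof (induction v arbitrary: S)
  case Nil then show ?case by auto
next
  case (Cons a v)
  have "nfa_run d S (a#v) = (\<Union>x\<in>(\<Union>q\<in>S. d q a). nfa_run d {x} v)"
    using Cons.IH[of "\<Union>q\<in>S. d q a"] by simp
  also have "\<dots> = (\<Union>s\<in>S. \<Union>x\<in>d s a. nfa_run d {x} v)" by blast
  also have "\<dots> = (\<Union>s\<in>S. nfa_run d {s} (a#v))"
  proof -
    have "nfa_run d {s} (a#v) = (\<Union>x\<in>d s a. nfa_run d {x} v)" for s
      using Cons.IH[of "d s a"] by simp
    then show ?thesis by simp
  qed
  finally show ?case .
qed

lemma run_bound: "is_nfa m q0 d F \<Longrightarrow> S \<subseteq> {..<m} \<Longrightarrow> nfa_run d S w \<subseteq> {..<m}"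
proof (induction w arbitrary: S)
  case Nil then show ?case by simp
next
  case (Cons a w)
  have dm: "\<And>q. q < m \<Longrightarrow> d q a \<subseteq> {0..<m}" using Cons.prems(1) unfolding is_nfa_def by blast
  have "(\<Union>q\<in>S. d q a) \<subseteq> {..<m}"
  proof
    fix x assume "x \<in> (\<Union>q\<in>S. d q a)"
    then obtain q where "q \<in> S" "x \<in> d q a" by blast
    moreover have "q < m" using \<open>q \<in> S\<close> Cons.prems(2) by auto
    ultimately show "x \<in> {..<m}" using dm[of q] by auto
  qed
  then show ?case using Cons by simp
qed

lemma nfa_fool:
  assumes "is_nfa m q0 d F" "nfa_lang q0 d F = L"
    and xy: "\<And>i. i<n \<Longrightarrow> x i @ y i \<in> L"
    and fo: "\<And>i j. i<n \<Longrightarrow> j<n \<Longrightarrow> i\<noteq>j \<Longrightarrow> x i @ y j \<notin> L \<or> x j @ y i \<notin> L"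
  shows "n \<le> m"
proof -
  have "\<exists>s. s \<in> nfa_run d {q0} (x i) \<and> nfa_run d {s} (y i) \<inter> F \<noteq> {}" if "i<n" for i
  proof -
    have "nfa_run d {q0} (x i @ y i) \<inter> F \<noteq> {}" using xy[OF that] assms(2) unfolding nfa_lang_def by auto
    then show ?thesis using run_append[of d "{q0}" "x i" "y i"] run_union[of d "nfa_run d {q0} (x i)" "y i"] by auto
  qed
  then obtain s where s: "\<And>i. i<n \<Longrightarrow> s i \<in> nfa_run d {q0} (x i) \<and> nfa_run d {s i} (y i) \<inter> F \<noteq> {}"
    by metis
  have acc: "x i @ y j \<in> L" if "i<n" "j<n" "s i = s j" for i j
  proof -
    have "nfa_run d {s i} (y j) \<subseteq> nfa_run d {q0} (x i @ y j)"
      using s[OF that(1)] run_append[of d "{q0}" "x i" "y j"] run_union[of d "nfa_run d {q0} (x i)" "y j"] by auto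
    then show ?thesis using s[OF that(2)] that(3) assms(2) unfolding nfa_lang_def by auto
  qed
  have inj: "inj_on s {..<n}"
    by (rule inj_onI) (use fo acc in fastforce)
  have "s ` {..<n} \<subseteq> {..<m}"
    using s run_bound[OF assms(1), of "{q0}"] assms(1) unfolding is_nfa_def by fastforce
  from card_inj_on_le[OF inj this] show ?thesis by simp
qed

lemma dfa_quot:
  assumes "is_dfa m q0 d F" "dfa_lang q0 d F = L"
  shows "card (range (\<lambda>u. {v. u@v \<in> L})) \<le> m"
proof -
  have fl: "foldl d s w < m" if "s < m" for s w
    using that assms(1) unfolding is_dfa_def by (induction w arbitrary: s) auto
  have "range (\<lambda>u. {v. u@v \<in> L}) \<subseteq> (\<lambda>s. {v. foldl d s v \<in> F}) ` {..<m}"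
  proof
    fix A assume "A \<in> range (\<lambda>u. {v. u@v \<in> L})"
    then obtain u where "A = {v. u@v \<in> L}" by auto
    then have "A = {v. foldl d (foldl d q0 u) v \<in> F}" using assms(2) unfolding dfa_lang_def by auto
    moreover have "foldl d q0 u < m" using fl assms(1) unfolding is_dfa_def by auto
    ultimately show "A \<in> (\<lambda>s. {v. foldl d s v \<in> F}) ` {..<m}" by auto
  qed
  then have "card (range (\<lambda>u. {v. u@v \<in> L})) \<le> card ((\<lambda>s. {v. foldl d s v \<in> F}) ` {..<m})"
    by (intro card_mono) auto
  also have "\<dots> \<le> m" using card_image_le[of "{..<m}"] by auto
  finally show ?thesis .
qed

lemma dfa_from_sets:
  assumes "is_nfa n q0 d F"
  shows "dfa_accepts_with (card (range (nfa_run d {q0}))) (nfa_lang q0 d F)"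
proof -
  define Rs where "Rs = range (nfa_run d {q0})"
  define K where "K = card Rs"
  have "Rs \<subseteq> Pow {..<n}" unfolding Rs_def using run_bound[OF assms, of "{q0}"] assms
    unfolding is_nfa_def by auto
  then have fin: "finite Rs" using finite_subset by blast
  obtain g where g: "bij_betw g {0..<K} Rs" using ex_bij_betw_nat_finite[OF fin] K_def by blast
  define idx where "idx = inv_into {0..<K} g"
  have idxK: "idx S < K" if "S \<in> Rs" for S
    using g that unfolding idx_def by (metis atLeastLessThan_iff bij_betw_def inv_into_into)
  have gidx: "g (idx S) = S" if "S \<in> Rs" for S
    using g that unfolding idx_def by (meson bij_betw_inv_into_right)
  have gR: "g i \<in> Rs" if "i < K" for i using g that unfolding bij_betw_def by auto
  have stepR: "(\<Union>q\<in>S. d q c) \<in> Rs" if SR: "S \<in> Rs" for S c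
  proof -
    obtain u where "S = nfa_run d {q0} u" using SR unfolding Rs_def by auto
    then have "(\<Union>q\<in>S. d q c) = nfa_run d {q0} (u@[c])" by (simp add: run_append)
    then show ?thesis unfolding Rs_def by auto
  qed
  define d' where "d' = (\<lambda>i c. if i < K then idx (\<Union>q\<in>g i. d q c) else 0)"
  define F' where "F' = {i. i < K \<and> g i \<inter> F \<noteq> {}}"
  have runR: "nfa_run d S w \<in> Rs" if "S \<in> Rs" for S w
    using that stepR by (induction w arbitrary: S) auto
  have fold: "foldl d' (idx S) w = idx (nfa_run d S w)" if "S \<in> Rs" for S w
    using that
  proof (induction w arbitrary: S)
    case Nil then show ?case by simp
  next
    case (Cons c w)
    have "d' (idx S) c = idx (\<Union>q\<in>S. d q c)" using Cons.prems idxK gidx d'_def by simp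
    then show ?case using Cons stepR by simp
  qed
  have q0R: "{q0} \<in> Rs" unfolding Rs_def by (metis nfa_run.simps(1) rangeI)
  have "is_dfa K (idx {q0}) d' F'"
    unfolding is_dfa_def using idxK[OF q0R] d'_def idxK gR stepR F'_def by auto
  moreover have "dfa_lang (idx {q0}) d' F' = nfa_lang q0 d F"
    unfolding dfa_lang_def nfa_lang_def F'_def using fold[OF q0R] runR[OF q0R] idxK gidx by auto
  ultimately show ?thesis unfolding dfa_accepts_with_def K_def Rs_def by blast
qed

lemma min_dfa_eq:
  assumes "is_nfa n q0 d F"
    and inj: "inj_on (\<lambda>S. {v. nfa_run d S v \<inter> F \<noteq> {}}) (range (nfa_run d {q0}))"
  shows "min_dfa_states (nfa_lang q0 d F) = card (range (nfa_run d {q0}))"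
    and "dfa_accepts_with (card (range (nfa_run d {q0}))) (nfa_lang q0 d F)"
proof -
  let ?L = "nfa_lang q0 d F"
  let ?Lg = "\<lambda>S. {v. nfa_run d S v \<inter> F \<noteq> {}}"
  have eq: "range (\<lambda>u. {v. u@v \<in> ?L}) = ?Lg ` range (nfa_run d {q0})"
    unfolding nfa_lang_def by (auto simp: run_append)
  have cq: "card (range (\<lambda>u. {v. u@v \<in> ?L})) = card (range (nfa_run d {q0}))"
    unfolding eq using card_image[OF inj] .
  show "dfa_accepts_with (card (range (nfa_run d {q0}))) ?L" using dfa_from_sets[OF assms(1)] .
  moreover have "card (range (nfa_run d {q0})) \<le> m" if "dfa_accepts_with m ?L" for m
    using that dfa_quot cq unfolding dfa_accepts_with_def by metis
  ultimately show "min_dfa_states ?L = card (range (nfa_run d {q0}))"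
    unfolding min_dfa_states_def by (intro Least_equality) auto
qed




definition dl :: "nat \<Rightarrow> nat \<Rightarrow> nat \<Rightarrow> nat \<Rightarrow> bool \<Rightarrow> nat set" where
  "dl n r q i c = {j. j = Suc i \<and> j < n} \<union> {j. c \<and> (i < 2*r \<or> i = q) \<and> j = i+2 \<and> j < n}"

definition Hs :: "nat \<Rightarrow> nat \<Rightarrow> bool \<Rightarrow> nat \<Rightarrow> nat" where
  "Hs r q c h = (if c \<and> (h < 2*r \<or> h = q) then h+2 else Suc h)"

definition Hf :: "nat \<Rightarrow> nat \<Rightarrow> nat \<Rightarrow> bool list \<Rightarrow> nat" where
  "Hf r q h w = foldl (\<lambda>h c. Hs r q c h) h w"

definition IS :: "nat \<Rightarrow> nat \<Rightarrow> nat \<Rightarrow> nat set" where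
  "IS n l h = {i. l \<le> i \<and> i \<le> h \<and> i < n}"

lemma step_IS: "l \<le> h \<Longrightarrow> (\<Union>i\<in>IS n l h. dl n r q i c) = IS n (Suc l) (Hs r q c h)"
proof (rule set_eqI, rule iffI)
  fix j assume lh: "l \<le> h" and "j \<in> (\<Union>i\<in>IS n l h. dl n r q i c)"
  then obtain i where "i \<in> IS n l h" "j \<in> dl n r q i c" by auto
  then show "j \<in> IS n (Suc l) (Hs r q c h)"
    unfolding IS_def dl_def Hs_def by (cases "i = h") auto
next
  fix j assume lh: "l \<le> h" and j: "j \<in> IS n (Suc l) (Hs r q c h)"
  show "j \<in> (\<Union>i\<in>IS n l h. dl n r q i c)"
  proof (cases "j \<le> Suc h")
    case True
    then have "j - 1 \<in> IS n l h" "j \<in> dl n r q (j - 1) c" using j unfolding IS_def dl_def by auto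
    then show ?thesis by blast
  next
    case False
    then have "j = h + 2" "c" "h < 2*r \<or> h = q" using j unfolding IS_def Hs_def by (auto split: if_splits)
    then have "h \<in> IS n l h" "j \<in> dl n r q h c" using j lh unfolding IS_def dl_def by auto
    then show ?thesis by blast
  qed
qed

lemma Hs_ge: "Suc h \<le> Hs r q c h" unfolding Hs_def by auto

lemma run_IS: "l \<le> h \<Longrightarrow> nfa_run (dl n r q) (IS n l h) w = IS n (l + length w) (Hf r q h w)"
proof (induction w arbitrary: l h)
  case Nil then show ?case by (simp add: Hf_def)
next
  case (Cons c w)
  have "nfa_run (dl n r q) (IS n l h) (c#w) = nfa_run (dl n r q) (IS n (Suc l) (Hs r q c h)) w"
    using step_IS[OF Cons.prems] by simp
  also have "\<dots> = IS n (Suc l + length w) (Hf r q (Hs r q c h) w)"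
    using Cons.IH[of "Suc l" "Hs r q c h"] Cons.prems Hs_ge[of h r q c] by simp
  finally show ?case by (simp add: Hf_def)
qed

lemma run0: "1 \<le> n \<Longrightarrow> nfa_run (dl n r q) {0} w = IS n (length w) (Hf r q 0 w)"
proof -
  assume "1 \<le> n"
  then have "{0} = IS n 0 0" unfolding IS_def by auto
  then show ?thesis using run_IS[of 0 0 n r q w] by simp
qed

definition Inv :: "nat \<Rightarrow> nat \<Rightarrow> nat \<Rightarrow> nat \<Rightarrow> bool" where
  "Inv r q l h \<longleftrightarrow> l \<le> h \<and> ((h - l \<le> l \<and> h - l \<le> r) \<or> (h - l = Suc r \<and> q + 1 - r \<le> l))"

lemma Inv_step: "2*r \<le> q \<Longrightarrow> Inv r q l h \<Longrightarrow> Inv r q (Suc l) (Hs r q c h)"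
  unfolding Inv_def Hs_def by (auto split: if_splits)

lemma Inv_run: "2*r \<le> q \<Longrightarrow> Inv r q l h \<Longrightarrow> Inv r q (l + length w) (Hf r q h w)"
proof (induction w arbitrary: l h)
  case Nil then show ?case by (simp add: Hf_def)
next
  case (Cons c w)
  have "Inv r q (Suc l + length w) (Hf r q (Hs r q c h) w)"
    using Cons.IH[OF Cons.prems(1) Inv_step[OF Cons.prems]] .
  then show ?case by (simp add: Hf_def)
qed

lemma Hf_F: "Hf r q h (replicate k False) = h + k"
  by (induction k arbitrary: h) (auto simp: Hf_def Hs_def)

lemma Hf_T: "i + d \<le> r \<Longrightarrow> Hf r q (2*i) (replicate d True) = 2*(i+d)"
proof (induction d arbitrary: i)
  case 0 then show ?case by (simp add: Hf_def)
next
  case (Suc d)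
  have "Hf r q (2*i) (replicate (Suc d) True) = Hf r q (2*(Suc i)) (replicate d True)"
    using Suc.prems by (simp add: Hf_def Hs_def)
  also have "\<dots> = 2*(Suc i + d)" by (rule Suc.IH) (use Suc.prems in simp)
  finally show ?case by simp
qed

lemma Hf_app: "Hf r q h (u@v) = Hf r q (Hf r q h u) v" by (simp add: Hf_def)

definition K :: "nat \<Rightarrow> nat \<Rightarrow> nat \<Rightarrow> (nat \<times> nat) set" where
  "K n r q = {(l,m). l < n \<and> l \<le> m \<and> m < n \<and> ((m - l \<le> l \<and> m - l \<le> r) \<or> (m - l = Suc r \<and> q + 1 - r \<le> l))}"

lemma reach_K:
  assumes "2*r \<le> q" "(l,m) \<in> K n r q"
  shows "\<exists>w. length w = l \<and> Hf r q 0 w = m"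
proof -
  from assms(2) have lm: "l \<le> m" "(m - l \<le> l \<and> m - l \<le> r) \<or> (m - l = Suc r \<and> q + 1 - r \<le> l)"
    unfolding K_def by auto
  from lm(2) show ?thesis
  proof
    assume a: "m - l \<le> l \<and> m - l \<le> r"
    define d where "d = m - l"
    define w where "w = replicate d True @ replicate (l - d) False"
    have "Hf r q 0 w = 2*d + (l - d)"
      unfolding w_def Hf_app using Hf_T[of 0 d r q] Hf_F a d_def by simp
    then show ?thesis using a lm(1) d_def w_def by (intro exI[of _ w]) auto
  next
    assume a: "m - l = Suc r \<and> q + 1 - r \<le> l"
    define w where "w = replicate r True @ replicate (q - 2*r) False @ [True] @ replicate (l - (q+1-r)) False"
    have h1: "Hf r q 0 (replicate r True) = 2*r" using Hf_T[of 0 r r q] by simp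
    have h2: "Hf r q (2*r) (replicate (q - 2*r) False) = q" using Hf_F assms(1) by simp
    have h3: "Hf r q q [True] = q + 2" by (simp add: Hf_def Hs_def)
    have "Hf r q 0 w = q + 2 + (l - (q+1-r))"
      unfolding w_def Hf_app h1 h2 h3 by (simp add: Hf_F)
    then show ?thesis using a lm(1) assms(1) w_def by (intro exI[of _ w]) auto
  qed
qed

lemma range_eq:
  assumes "1 \<le> n" "2*r \<le> q"
  shows "range (nfa_run (dl n r q) {0}) = insert {} ((\<lambda>(l,m). {l..m}) ` K n r q)"
proof (rule set_eqI, rule iffI)
  fix S assume "S \<in> range (nfa_run (dl n r q) {0})"
  then obtain w where S: "S = IS n (length w) (Hf r q 0 w)" using run0[OF assms(1)] by auto
  have I: "Inv r q (length w) (Hf r q 0 w)" using Inv_run[OF assms(2), of 0 0 w] unfolding Inv_def by simp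
  show "S \<in> insert {} ((\<lambda>(l,m). {l..m}) ` K n r q)"
  proof (cases "length w < n")
    case False then have "S = {}" using S unfolding IS_def by auto
    then show ?thesis by simp
  next
    case True
    let ?l = "length w" and ?m = "min (Hf r q 0 w) (n - 1)"
    have "S = {?l..?m}" using S True unfolding IS_def by auto
    moreover have "(?l, ?m) \<in> K n r q" using I True assms unfolding Inv_def K_def by auto
    ultimately show ?thesis by force
  qed
next
  fix S assume "S \<in> insert {} ((\<lambda>(l,m). {l..m}) ` K n r q)"
  then consider "S = {}" | l m where "(l,m) \<in> K n r q" "S = {l..m}" by auto
  then show "S \<in> range (nfa_run (dl n r q) {0})"
  proof cases
    case 1
    have "nfa_run (dl n r q) {0} (replicate n False) = {}" using run0[OF assms(1)] unfolding IS_def by auto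
    then show ?thesis using 1 by (metis rangeI)
  next
    case 2
    obtain w where w: "length w = l" "Hf r q 0 w = m" using reach_K[OF assms(2) 2(1)] by auto
    have "m < n" using 2(1) unfolding K_def by auto
    then have "nfa_run (dl n r q) {0} w = S" using run0[OF assms(1)] w 2(2) unfolding IS_def by auto
    then show ?thesis by (metis rangeI)
  qed
qed




lemma sum_layers: "2*(r::nat) < n \<Longrightarrow> (\<Sum>e\<in>{..r}. n - 2*e) = (r+1)*(n-r)"
proof (induction r)
  case 0 then show ?case by simp
next
  case (Suc r)
  have "2*r < n" using Suc.prems by simp
  then have "(\<Sum>e\<in>{..Suc r}. n - 2*e) = (r+1)*(n-r) + (n - 2*Suc r)" using Suc.IH by simp
  also have "\<dots> = (Suc r + 1)*(n - Suc r)"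
  proof -
    define s where "s = n - (2*Suc r + 1)"
    have "n = 2*Suc r + 1 + s" using Suc.prems unfolding s_def by simp
    then show ?thesis by (simp add: algebra_simps)
  qed
  finally show ?case .
qed

lemma card_K:
  assumes "2*r < n" "2*r \<le> q"
  shows "card (K n r q) = (r+1)*(n-r) + (n - 2 - q)"
proof -
  define A where "A = (\<lambda>e. (\<lambda>l. (l, l+e)) ` {e..n-1-e})"
  define B where "B = (\<lambda>l. (l, l + Suc r)) ` {q+1-r..n-2-r}"
  have Keq: "K n r q = (\<Union>e\<in>{..r}. A e) \<union> B"
  proof (rule set_eqI)
    fix p :: "nat \<times> nat"
    obtain l m where p: "p = (l,m)" by (cases p)
    show "p \<in> K n r q \<longleftrightarrow> p \<in> (\<Union>e\<in>{..r}. A e) \<union> B"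
    proof
      assume "p \<in> K n r q"
      then have k: "l < n" "l \<le> m" "m < n" "(m - l \<le> l \<and> m - l \<le> r) \<or> (m - l = Suc r \<and> q + 1 - r \<le> l)"
        unfolding K_def p by auto
      from k(4) show "p \<in> (\<Union>e\<in>{..r}. A e) \<union> B"
      proof
        assume a: "m - l \<le> l \<and> m - l \<le> r"
        have "(l,m) \<in> A (m-l)" unfolding A_def using k a
          by (intro image_eqI[of _ _ l]) auto
        then show ?thesis using a p by blast
      next
        assume a: "m - l = Suc r \<and> q + 1 - r \<le> l"
        have "(l,m) \<in> B" unfolding B_def using k a
          by (intro image_eqI[of _ _ l]) auto
        then show ?thesis using p by blast
      qed
    next
      assume "p \<in> (\<Union>e\<in>{..r}. A e) \<union> B"
      then show "p \<in> K n r q" unfolding p A_def B_def K_def using assms by auto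
    qed
  qed
  have cA: "card (A e) = n - 2*e" if "e \<le> r" for e
  proof -
    have "card (A e) = card {e..n-1-e}" unfolding A_def by (rule card_image) (auto intro: inj_onI)
    then show ?thesis using that assms by simp
  qed
  have dA: "A i \<inter> A j = {}" if "i \<noteq> j" for i j using that unfolding A_def by auto
  have cU: "card (\<Union>e\<in>{..r}. A e) = (\<Sum>e\<in>{..r}. n - 2*e)"
    using card_UN_disjoint[of "{..r}" A] dA cA unfolding A_def by auto
  have dB: "(\<Union>e\<in>{..r}. A e) \<inter> B = {}" unfolding A_def B_def by auto
  have cB: "card B = n - 2 - q"
  proof -
    have "card B = card {q+1-r..n-2-r}" unfolding B_def by (rule card_image) (auto intro: inj_onI)
    then show ?thesis using assms by simp
  qed
  have "card (K n r q) = card (\<Union>e\<in>{..r}. A e) + card B"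
    unfolding Keq by (rule card_Un_disjoint) (use dB in \<open>auto simp: A_def B_def\<close>)
  then show ?thesis using cU cB sum_layers[OF assms(1)] by simp
qed

lemma arith_exists:
  "2*(R::nat) < n \<Longrightarrow> E \<le> R*(n-1-R) \<Longrightarrow> \<exists>r t. r \<le> R \<and> E = r*(n-1-r) + t \<and> (t = 0 \<or> 2*r + t \<le> n - 2)"
proof (induction R arbitrary: E)
  case 0 then show ?case by simp
next
  case (Suc R)
  show ?case
  proof (cases "E \<le> R*(n-1-R)")
    case True
    have "2*R < n" using Suc.prems by simp
    then obtain r t where "r \<le> R \<and> E = r*(n-1-r) + t \<and> (t = 0 \<or> 2*r + t \<le> n - 2)"
      using Suc.IH True by blast
    then show ?thesis by (intro exI[of _ r] exI[of _ t]) auto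
  next
    case False
    define s where "s = n - (2*Suc R + 1)"
    have n: "n = 2*Suc R + 1 + s" using Suc.prems unfolding s_def by simp
    have "Suc R*(n-1-Suc R) = R*(n-1-R) + (n - 2 - 2*R)" unfolding n by (simp add: algebra_simps)
    then show ?thesis using False Suc.prems(2) n
      by (intro exI[of _ R] exI[of _ "E - R*(n-1-R)"]) auto
  qed
qed




lemma card_range:
  assumes "1 \<le> n" "2*r < n" "2*r \<le> q"
  shows "card (range (nfa_run (dl n r q) {0})) = Suc ((r+1)*(n-r) + (n-2-q))"
proof -
  have fK: "finite (K n r q)" by (rule finite_subset[of _ "{..<n} \<times> {..<n}"]) (auto simp: K_def)
  have Kle: "K n r q \<subseteq> {(l,m). l \<le> m}" unfolding K_def by auto
  have inj0: "inj_on (\<lambda>(l,m). {l..m::nat}) {(l,m). l \<le> m}"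
    by (rule inj_onI) auto
  have inj: "inj_on (\<lambda>(l,m). {l..m}) (K n r q)" using inj_on_subset[OF inj0 Kle] .
  have ne: "{} \<notin> (\<lambda>(l,m). {l..m}) ` K n r q" using Kle by auto
  have "card (range (nfa_run (dl n r q) {0})) = Suc (card ((\<lambda>(l,m). {l..m}) ` K n r q))"
    unfolding range_eq[OF assms(1,3)] using ne fK by (simp add: card_insert_if)
  also have "\<dots> = Suc (card (K n r q))" using card_image[OF inj] by simp
  finally show ?thesis using card_K[OF assms(2,3)] by simp
qed

lemma is_nfa_dl: "1 \<le> n \<Longrightarrow> is_nfa n 0 (dl n r q) {n-1}"
  unfolding is_nfa_def dl_def by auto

lemma run_F: "S \<subseteq> {..<n} \<Longrightarrow> nfa_run (dl n r q) S (replicate k False) = {j. \<exists>i\<in>S. j = i+k \<and> j < n}"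
proof (induction k arbitrary: S)
  case 0 then show ?case by auto
next
  case (Suc k)
  have e: "(\<Union>i\<in>S. dl n r q i False) = {j. \<exists>i\<in>S. j = Suc i \<and> j < n}" unfolding dl_def by auto
  have "nfa_run (dl n r q) S (replicate (Suc k) False) = nfa_run (dl n r q) {j. \<exists>i\<in>S. j = Suc i \<and> j < n} (replicate k False)"
    using e by simp
  also have "\<dots> = {j. \<exists>i\<in>{j. \<exists>i\<in>S. j = Suc i \<and> j < n}. j = i+k \<and> j < n}"
    by (rule Suc.IH) auto
  also have "\<dots> = {j. \<exists>i\<in>S. j = i + Suc k \<and> j < n}" by auto
  finally show ?case .
qed

lemma inj_Lg:
  assumes "1 \<le> n"
  shows "inj_on (\<lambda>S. {v. nfa_run (dl n r q) S v \<inter> {n-1} \<noteq> {}}) (range (nfa_run (dl n r q) {0}))"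
proof (rule inj_onI)
  fix S S' assume S: "S \<in> range (nfa_run (dl n r q) {0})" and S': "S' \<in> range (nfa_run (dl n r q) {0})"
    and eq: "{v. nfa_run (dl n r q) S v \<inter> {n-1} \<noteq> {}} = {v. nfa_run (dl n r q) S' v \<inter> {n-1} \<noteq> {}}"
  have sub: "T \<subseteq> {..<n}" if "T \<in> range (nfa_run (dl n r q) {0})" for T
    using that run_bound[OF is_nfa_dl[OF assms], of "{0}"] assms by auto
  have mem: "i \<in> T \<longleftrightarrow> replicate (n-1-i) False \<in> {v. nfa_run (dl n r q) T v \<inter> {n-1} \<noteq> {}}"
    if "T \<subseteq> {..<n}" "i < n" for T i
  proof -
    have "n - 1 \<in> {j. \<exists>i'\<in>T. j = i' + (n-1-i) \<and> j < n} \<longleftrightarrow> (\<exists>i'\<in>T. n - 1 = i' + (n-1-i))"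
      using assms by auto
    also have "\<dots> \<longleftrightarrow> (\<exists>i'\<in>T. i' = i)"
      by (rule bex_cong) (use that(2) in arith)+
    also have "\<dots> \<longleftrightarrow> i \<in> T" by simp
    finally show ?thesis using run_F[OF that(1)] by simp
  qed
  show "S = S'"
  proof (rule set_eqI)
    fix x
    show "x \<in> S \<longleftrightarrow> x \<in> S'"
    proof (cases "x < n")
      case True
      have "replicate (n-1-x) False \<in> {v. nfa_run (dl n r q) S v \<inter> {n-1} \<noteq> {}} \<longleftrightarrow>
            replicate (n-1-x) False \<in> {v. nfa_run (dl n r q) S' v \<inter> {n-1} \<noteq> {}}"
        unfolding eq ..
      then show ?thesis using mem[OF sub[OF S] True] mem[OF sub[OF S'] True] by blast
    next
      case False then show ?thesis using sub[OF S] sub[OF S'] by auto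
    qed
  qed
qed

lemma lang_props:
  assumes "1 \<le> n"
  shows "finite (nfa_lang 0 (dl n r q) {n-1})"
    and "replicate k False \<in> nfa_lang 0 (dl n r q) {n-1} \<longleftrightarrow> k = n-1"
proof -
  have "nfa_lang 0 (dl n r q) {n-1} \<subseteq> {w. set w \<subseteq> UNIV \<and> length w \<le> n}"
    unfolding nfa_lang_def using run0[OF assms] by (auto simp: IS_def)
  then show "finite (nfa_lang 0 (dl n r q) {n-1})"
    using finite_lists_length_le[of "UNIV :: bool set" n] finite_subset by auto
  show "replicate k False \<in> nfa_lang 0 (dl n r q) {n-1} \<longleftrightarrow> k = n-1"
    unfolding nfa_lang_def using run_F[of "{0}" n r q k] assms by auto
qed

lemma minimal:
  assumes "1 \<le> n"
  shows "minimal_nfa n 0 (dl n r q) {n-1}"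
  unfolding minimal_nfa_def
proof (intro conjI allI impI is_nfa_dl[OF assms])
  fix m assume "m < n"
  show "\<not> nfa_accepts_with m (nfa_lang 0 (dl n r q) {n-1})"
  proof
    assume "nfa_accepts_with m (nfa_lang 0 (dl n r q) {n-1})"
    then obtain q0 d F where A: "is_nfa m q0 d F" "nfa_lang q0 d F = nfa_lang 0 (dl n r q) {n-1}"
      unfolding nfa_accepts_with_def by blast
    have mem: "replicate k False \<in> nfa_lang 0 (dl n r q) {n-1} \<longleftrightarrow> k = n-1" for k
      using lang_props(2)[OF assms] .
    have ap: "replicate i False @ replicate (n-1-j) False = replicate (i + (n-1-j)) False" for i j
      by (simp add: replicate_add)
    have "n \<le> m"
    proof (rule nfa_fool[OF A, of n "\<lambda>i. replicate i False" "\<lambda>i. replicate (n-1-i) False"])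
      fix i assume "i < n"
      then have "i + (n-1-i) = n - 1" by arith
      then show "replicate i False @ replicate (n-1-i) False \<in> nfa_lang 0 (dl n r q) {n-1}"
        unfolding ap mem by simp
    next
      fix i j assume "i < n" "j < n" "i \<noteq> j"
      then have "i + (n-1-j) \<noteq> n - 1" by arith
      then show "replicate i False @ replicate (n-1-j) False \<notin> nfa_lang 0 (dl n r q) {n-1} \<or>
                 replicate j False @ replicate (n-1-i) False \<notin> nfa_lang 0 (dl n r q) {n-1}"
        unfolding ap mem by simp
    qed
    then show False using \<open>m < n\<close> by simp
  qed
qed

theorem mainTheorem10:
  fixes n \<alpha> :: nat
  assumes "n \<ge> 1"
    and "n + 1 \<le> \<alpha>"
    and "even n \<Longrightarrow> \<alpha> \<le> (n div 2)^2 + n div 2 + 1"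
    and "odd n \<Longrightarrow> \<alpha> \<le> ((n - 1) div 2)^2 + n + 1"
  shows "\<exists>q0 delta F. minimal_nfa n q0 delta F \<and> finite (nfa_lang q0 delta F)
           \<and> dfa_accepts_with \<alpha> (nfa_lang q0 delta F)
           \<and> min_dfa_states (nfa_lang q0 delta F) = \<alpha>"
proof -
  define E where "E = \<alpha> - (n+1)"
  have "\<exists>R. 2*R < n \<and> E \<le> R*(n-1-R)"
  proof (cases "even n")
    case True
    then obtain k where k: "n = 2*k" by blast
    then obtain j where j: "k = Suc j" using assms(1) by (cases k) auto
    have kd: "n div 2 = k" using k by simp
    have "\<alpha> \<le> k^2 + k + 1" using assms(3)[OF True] unfolding kd .
    moreover have "k^2 + k + 1 = j * Suc j + (n+1)" unfolding k j by (simp add: power2_eq_square algebra_simps)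
    ultimately have "E \<le> j * Suc j" unfolding E_def by linarith
    moreover have "n - 1 - j = Suc j" using k j by simp
    moreover have "2*j < n" using k j by simp
    ultimately show ?thesis by (intro exI[of _ j]) simp
  next
    case False
    then obtain k where k: "n = 2*k+1" using oddE by blast
    have kd: "(n - 1) div 2 = k" using k by simp
    have "\<alpha> \<le> k^2 + n + 1" using assms(4)[OF False] unfolding kd .
    then have "E \<le> k * k" unfolding E_def power2_eq_square by linarith
    moreover have "n - 1 - k = k" using k by simp
    moreover have "2*k < n" using k by simp
    ultimately show ?thesis by (intro exI[of _ k]) simp
  qed
  then obtain R where R: "2*R < n" "E \<le> R*(n-1-R)" by blast
  obtain r t where rt: "r \<le> R" "E = r*(n-1-r) + t" "t = 0 \<or> 2*r + t \<le> n - 2"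
    using arith_exists[OF R] by blast
  define q where "q = (if t = 0 then n + 2*r else n - 2 - t)"
  have r2: "2*r < n" using rt(1) R(1) by simp
  have q2: "2*r \<le> q" using rt(3) unfolding q_def by auto
  have qt: "n - 2 - q = t" using rt(3) unfolding q_def by auto
  have id: "(r+1)*(n-r) = n + r*(n-1-r)"
  proof -
    define s where "s = n - (r+1)"
    have n: "n = r + 1 + s" using r2 unfolding s_def by simp
    show ?thesis unfolding n by (simp add: algebra_simps)
  qed
  have cnt: "card (range (nfa_run (dl n r q) {0})) = \<alpha>"
  proof -
    have "card (range (nfa_run (dl n r q) {0})) = Suc ((r+1)*(n-r) + (n-2-q))"
      using card_range[OF assms(1) r2 q2] .
    also have "\<dots> = Suc (n + r*(n-1-r) + t)" unfolding id qt by simp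
    also have "\<dots> = \<alpha>" using rt(2) E_def assms(2) by linarith
    finally show ?thesis .
  qed
  have m1: "min_dfa_states (nfa_lang 0 (dl n r q) {n-1}) = \<alpha>"
    using min_dfa_eq(1)[OF is_nfa_dl[OF assms(1), of r q] inj_Lg[OF assms(1), of r q]] unfolding cnt .
  have m2: "dfa_accepts_with \<alpha> (nfa_lang 0 (dl n r q) {n-1})"
    using min_dfa_eq(2)[OF is_nfa_dl[OF assms(1), of r q] inj_Lg[OF assms(1), of r q]] unfolding cnt .
  show ?thesis
    using minimal[OF assms(1)] lang_props(1)[OF assms(1)] m1 m2 by blast
qed


end
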